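(* Let $\psi_0:\mathbb{R}\to\mathbb{R}$ be any càdlàg function with $\lim_{|x|\to\infty}x^{-2}\psi_0(x)=0$, and let $\mathbf{r},\mathbf{s},\mathbf{t}$ be as in the context. Then $\mathbf{s}=\mathbf{t}$.
   Context: Write $\bar\psi(y):=\psi_0(y)\vee\psi_0(y-)$. Define $\mathbf{t}:=\inf\{y\ge0: \bar\psi(y-x)-\bar\psi(y)\le\tfrac12x^2 \text{ and } \bar\psi(y+x)-\bar\psi(y)<\tfrac12x^2 \text{ for all } x>0\}$ (equivalently, the first $y\ge0$ with $a(y)=y$, where $a(x)$ is the largest maximizer of $z\mapsto\bar\psi(z)-\tfrac12(z-x)^2$); $\mathbf{r}:=\inf\{y\ge0: \bar\psi(y-x)-\bar\psi(y)\le\tfrac12x^2 \text{ for all } x>0\}$; $\mathbf{s}:=\inf\{y\ge\mathbf{r}: \bar\psi(y+x)-\bar\psi(y)<\tfrac12x^2 \text{ for all } x>0\}$. *)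

theory Defs
  imports "HOL-Analysis.Analysis"
begin

definition cadlag :: "(real \<Rightarrow> real) \<Rightarrow> bool" where
  "cadlag f \<longleftrightarrow> (\<forall>x. continuous (at_right x) f \<and> (\<exists>l. (f \<longlongrightarrow> l) (at_left x)))"

definition left_lim :: "(real \<Rightarrow> real) \<Rightarrow> real \<Rightarrow> real" where
  "left_lim f y = Lim (at_left y) f"

definition psibar :: "(real \<Rightarrow> real) \<Rightarrow> real \<Rightarrow> real" where
  "psibar f y = max (f y) (left_lim f y)"

text \<open>Infima are taken in the extended reals, so that inf of the empty set is +infinity.\<close>
definition t_pt :: "(real \<Rightarrow> real) \<Rightarrow> ereal" where
  "t_pt f = Inf (ereal ` {y. y \<ge> 0 \<and>
     (\<forall>x>0. psibar f (y - x) - psibar f y \<le> x\<^sup>2 / 2 \<and> psibar f (y + x) - psibar f y < x\<^sup>2 / 2)})"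

definition r_pt :: "(real \<Rightarrow> real) \<Rightarrow> ereal" where
  "r_pt f = Inf (ereal ` {y. y \<ge> 0 \<and>
     (\<forall>x>0. psibar f (y - x) - psibar f y \<le> x\<^sup>2 / 2)})"

definition s_pt :: "(real \<Rightarrow> real) \<Rightarrow> ereal" where
  "s_pt f = Inf (ereal ` {y. ereal y \<ge> r_pt f \<and>
     (\<forall>x>0. psibar f (y + x) - psibar f y < x\<^sup>2 / 2)})"

end

theory Submission
  imports Defs
begin

definition usc :: "(real \<Rightarrow> real) \<Rightarrow> bool" where
  "usc g \<longleftrightarrow> (\<forall>x e. e > 0 \<longrightarrow> (\<exists>d>0. \<forall>u. \<bar>u - x\<bar> < d \<longrightarrow> g u < g x + e))"

lemma left_lim_bound:
  assumes "cadlag f" "a < u" "\<And>v. a < v \<Longrightarrow> v < u \<Longrightarrow> f v \<le> c"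
  shows "left_lim f u \<le> c"
proof -
  obtain l where l: "(f \<longlongrightarrow> l) (at_left u)" using assms(1) unfolding cadlag_def by blast
  have "left_lim f u = l" unfolding left_lim_def using l by (simp add: tendsto_Lim)
  moreover have "l \<le> c"
  proof (rule tendsto_upperbound[OF l])
    show "\<forall>\<^sub>F x in at_left u. f x \<le> c"
      using eventually_at_left_real[OF assms(2)] by eventually_elim (use assms(3) in auto)
  qed simp
  ultimately show ?thesis by simp
qed

lemma usc_psibar:
  assumes "cadlag f"
  shows "usc (psibar f)"
  unfolding usc_def
proof (intro allI impI)
  fix x e :: real assume e: "e > 0"
  have rc: "(f \<longlongrightarrow> f x) (at_right x)"
    using assms unfolding cadlag_def continuous_within by blast
  obtain l where l: "(f \<longlongrightarrow> l) (at_left x)" using assms(1) unfolding cadlag_def by blast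
  have ll: "left_lim f x = l" unfolding left_lim_def using l by (simp add: tendsto_Lim)
  have "\<forall>\<^sub>F v in at_right x. dist (f v) (f x) < e/2" using tendsto_iff[THEN iffD1, OF rc, rule_format, of "e/2"] e by simp
  then obtain b1 where b1: "b1 > x" "\<And>v. x < v \<Longrightarrow> v < b1 \<Longrightarrow> dist (f v) (f x) < e/2"
    unfolding eventually_at_right_field by blast
  have "\<forall>\<^sub>F v in at_left x. dist (f v) l < e/2" using tendsto_iff[THEN iffD1, OF l, rule_format, of "e/2"] e by simp
  then obtain b2 where b2: "b2 < x" "\<And>v. b2 < v \<Longrightarrow> v < x \<Longrightarrow> dist (f v) l < e/2"
    unfolding eventually_at_left_field by blast
  define d where "d = min (b1 - x) (x - b2)"
  have dpos: "d > 0" using b1 b2 by (simp add: d_def)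
  have px: "f x \<le> psibar f x" "l \<le> psibar f x" unfolding psibar_def using ll by auto
  show "\<exists>d>0. \<forall>u. \<bar>u - x\<bar> < d \<longrightarrow> psibar f u < psibar f x + e"
  proof (intro exI[of _ d] conjI allI impI dpos)
    fix u assume u: "\<bar>u - x\<bar> < d"
    consider "u = x" | "x < u" | "u < x" by linarith
    then show "psibar f u < psibar f x + e"
    proof cases
      case 1 then show ?thesis using e by simp
    next
      case 2
      have ub: "u < b1" using u d_def by auto
      have "f u \<le> f x + e/2" using b1(2)[OF 2 ub] unfolding dist_real_def by arith
      moreover have "left_lim f u \<le> f x + e/2"
        proof (rule left_lim_bound[OF assms 2])
          fix v assume "x < v" "v < u"
          then show "f v \<le> f x + e/2" using b1(2)[of v] ub unfolding dist_real_def by arith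
        qed
      ultimately show ?thesis using px e unfolding psibar_def by auto
    next
      case 3
      have ub: "b2 < u" using u d_def by auto
      have "f u \<le> l + e/2" using b2(2)[OF ub 3] unfolding dist_real_def by arith
      moreover have "left_lim f u \<le> l + e/2"
        proof (rule left_lim_bound[OF assms ub])
          fix v assume "b2 < v" "v < u"
          then show "f v \<le> l + e/2" using b2(2)[of v] 3 unfolding dist_real_def by arith
        qed
      ultimately show ?thesis using px e unfolding psibar_def by auto
    qed
  qed
qed

lemma usc_max:
  fixes g :: "real \<Rightarrow> real"
  assumes usc: "usc g" and ab: "a \<le> b"
  shows "\<exists>z\<in>{a..b}. \<forall>u\<in>{a..b}. g u \<le> g z"
proof -
  define M where "M = Sup (ereal ` g ` {a..b})"
  define K where "K c = {u\<in>{a..b}. c \<le> g u}" for c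
  have closedK: "closed (K c)" for c
    unfolding closed_sequential_limits
  proof (intro allI impI, elim conjE)
    fix x l assume xK: "\<forall>n. x n \<in> K c" and lim: "x \<longlonglongrightarrow> l"
    have "l \<in> {a..b}"
      using closed_sequentially[OF closed_real_atLeastAtMost _ lim, of a b] xK unfolding K_def by auto
    moreover have "c \<le> g l"
    proof (rule ccontr)
      assume "\<not> c \<le> g l"
      then obtain d where d: "d > 0" "\<And>u. \<bar>u - l\<bar> < d \<Longrightarrow> g u < g l + (c - g l)"
        using usc unfolding usc_def by (metis diff_gt_0_iff_gt not_le)
      have "\<forall>\<^sub>F n in sequentially. dist (x n) l < d"
        using lim d(1) tendsto_iff by blast
      then obtain n where "dist (x n) l < d" by (meson eventually_sequentially order_refl)
      then have "g (x n) < c" using d(2)[of "x n"] by (simp add: dist_real_def)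
      moreover have "c \<le> g (x n)" using xK unfolding K_def by blast
      ultimately show False by simp
    qed
    ultimately show "l \<in> K c" unfolding K_def by simp
  qed
  have "{a..b} \<inter> (\<Inter>c\<in>{c. ereal c < M}. K c) \<noteq> {}"
  proof (rule compact_imp_fip_image[OF compact_Icc closedK])
    fix I' assume fin: "finite I'" and sub: "I' \<subseteq> {c. ereal c < M}"
    show "{a..b} \<inter> (\<Inter>c\<in>I'. K c) \<noteq> {}"
    proof (cases "I' = {}")
      case True then show ?thesis using ab by auto
    next
      case False
      have "Max I' \<in> I'" using fin False by simp
      then have "ereal (Max I') < M" using sub by auto
      then obtain u where u: "u \<in> {a..b}" "ereal (Max I') < ereal (g u)"
        unfolding M_def less_SUP_iff image_image by blast
      have "u \<in> K c" if "c \<in> I'" for c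
        using u Max_ge[OF fin that] unfolding K_def by auto
      then show ?thesis using u by blast
    qed
  qed
  then obtain z where z: "z \<in> {a..b}" "\<And>c. ereal c < M \<Longrightarrow> c \<le> g z"
    unfolding K_def by blast
  have "g u \<le> g z" if u: "u \<in> {a..b}" for u
  proof (rule ccontr)
    assume "\<not> g u \<le> g z"
    then have "ereal ((g z + g u)/2) < ereal (g u)" by simp
    also have "ereal (g u) \<le> M" unfolding M_def using u by (auto intro: SUP_upper)
    finally have "(g z + g u)/2 \<le> g z" using z(2) by blast
    then show False using \<open>\<not> g u \<le> g z\<close> by simp
  qed
  then show ?thesis using z by blast
qed

definition Lp :: "(real \<Rightarrow> real) \<Rightarrow> real \<Rightarrow> bool" where
  "Lp g y \<longleftrightarrow> (\<forall>x>0. g (y - x) - g y \<le> x\<^sup>2 / 2)"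
definition Rp :: "(real \<Rightarrow> real) \<Rightarrow> real \<Rightarrow> bool" where
  "Rp g y \<longleftrightarrow> (\<forall>x>0. g (y + x) - g y < x\<^sup>2 / 2)"

lemma sq_bound:
  fixes x h eta delta :: real
  assumes "x > 0" "delta > 0" "\<bar>h\<bar> < eta" "eta \<le> x/2" "eta \<le> delta/(3*x)"
  shows "(x + h)\<^sup>2 < x\<^sup>2 + delta"
proof -
  have "(x+h)\<^sup>2 - x\<^sup>2 = h * (2*x + h)" by (simp add: power2_eq_square algebra_simps)
  also have "\<dots> \<le> \<bar>h\<bar> * \<bar>2*x + h\<bar>" by (metis abs_ge_self abs_mult)
  also have "\<dots> \<le> \<bar>h\<bar> * (3*x)"
    by (rule mult_left_mono) (use assms in arith)+
  also have "\<dots> < eta * (3*x)" using assms by (intro mult_strict_right_mono) auto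
  also have "\<dots> \<le> delta/(3*x) * (3*x)" using assms by (intro mult_right_mono) auto
  also have "\<dots> = delta" using assms by simp
  finally show ?thesis by simp
qed

lemma L_closed:
  assumes usc: "usc g" and approx: "\<And>eta. eta > 0 \<Longrightarrow> \<exists>y'. \<bar>y' - y\<bar> < eta \<and> Lp g y'"
  shows "Lp g y"
  unfolding Lp_def
proof (intro allI impI)
  fix x :: real assume x: "x > 0"
  show "g (y - x) - g y \<le> x\<^sup>2 / 2"
  proof (rule ccontr)
    assume neg: "\<not> g (y - x) - g y \<le> x\<^sup>2 / 2"
    define delta where "delta = g (y - x) - g y - x\<^sup>2 / 2"
    have dpos: "delta > 0" using neg by (simp add: delta_def)
    obtain d1 where d1: "d1 > 0" "\<And>u. \<bar>u - y\<bar> < d1 \<Longrightarrow> g u < g y + delta/2"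
      using usc dpos unfolding usc_def by (meson half_gt_zero)
    define eta where "eta = min d1 (min (x/2) (delta/(3*x)))"
    have epos: "eta > 0" using d1 x dpos by (simp add: eta_def)
    obtain y' where y': "\<bar>y' - y\<bar> < eta" "Lp g y'" using approx[OF epos] by blast
    define h where "h = y' - y"
    have "(x + h)\<^sup>2 < x\<^sup>2 + delta"
      by (rule sq_bound[OF x dpos _ _ _, of h eta]) (use y' in \<open>auto simp: h_def eta_def\<close>)
    moreover have "\<bar>h\<bar> < x/2" using y'(1) by (simp add: h_def eta_def)
    then have "x + h > 0" by arith
    moreover have "g (y' - (x + h)) - g y' \<le> (x+h)\<^sup>2 / 2"
      using y'(2) \<open>x + h > 0\<close> unfolding Lp_def by blast
    moreover have "y' - (x + h) = y - x" by (simp add: h_def)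
    moreover have "g y' < g y + delta/2" using d1(2) y'(1) by (simp add: eta_def)
    ultimately show False unfolding delta_def by (simp add: field_simps)
  qed
qed

lemma usc_minus_cont:
  assumes "usc g" "\<And>x. isCont h x"
  shows "usc (\<lambda>u. g u - h u)"
  unfolding usc_def
proof (intro allI impI)
  fix x e :: real assume e: "e > 0"
  obtain d1 where d1: "d1 > 0" "\<And>u. \<bar>u - x\<bar> < d1 \<Longrightarrow> g u < g x + e/2"
    using assms(1) e unfolding usc_def by (meson half_gt_zero)
  obtain d2 where d2: "d2 > 0" "\<And>u. u \<noteq> x \<and> norm (u - x) < d2 \<longrightarrow> norm (h u - h x) < e/2"
    using LIM_D[OF assms(2)[of x, unfolded isCont_def], of "e/2"] e by auto
  show "\<exists>d>0. \<forall>u. \<bar>u - x\<bar> < d \<longrightarrow> g u - h u < g x - h x + e"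
  proof (intro exI[of _ "min d1 d2"] conjI allI impI)
    fix u assume u: "\<bar>u - x\<bar> < min d1 d2"
    have a: "g u < g x + e/2" using d1(2) u by simp
    have b: "\<bar>h u - h x\<bar> < e/2"
    proof (cases "u = x")
      case True then show ?thesis using e by simp
    next
      case False then show ?thesis using d2(2)[of u] u by simp
    qed
    show "g u - h u < g x - h x + e" using a b by arith
  qed (use d1 d2 in auto)
qed

lemma key:
  assumes usc: "usc g" and py: "p \<le> y" and Lpp: "Lp g p" and Ry: "Rp g y"
  shows "\<exists>q. p \<le> q \<and> q \<le> y \<and> Lp g q \<and> Rp g q"
proof -
  define S where "S = {x. p \<le> x \<and> x \<le> y \<and> Lp g x}"
  define q where "q = Sup S"
  have pS: "p \<in> S" using py Lpp by (simp add: S_def)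
  have bdd: "bdd_above S" unfolding S_def by (rule bdd_aboveI[of _ y]) auto
  have pq: "p \<le> q" unfolding q_def by (rule cSup_upper[OF pS bdd])
  have qy: "q \<le> y" unfolding q_def using pS by (intro cSup_least) (auto simp: S_def)
  have upper: "x \<le> q" if "x \<in> S" for x unfolding q_def by (rule cSup_upper[OF that bdd])
  have Lq: "Lp g q"
  proof (rule L_closed[OF usc])
    fix eta :: real assume "eta > 0"
    then have "q - eta < Sup S" by (simp add: q_def)
    then obtain x where "x \<in> S" "q - eta < x" using less_cSup_iff[of S] pS bdd by blast
    moreover have "x \<le> q" using upper[OF \<open>x \<in> S\<close>] .
    ultimately show "\<exists>y'. \<bar>y' - q\<bar> < eta \<and> Lp g y'" by (intro exI[of _ x]) (auto simp: S_def)
  qed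
  have Rq: "Rp g q"
    unfolding Rp_def
  proof (intro allI impI)
    fix x :: real assume x: "x > 0"
    show "g (q + x) - g q < x\<^sup>2 / 2"
    proof (rule ccontr)
      assume neg: "\<not> g (q + x) - g q < x\<^sup>2 / 2"
      define w where "w = q + x"
      define G where "G u = g u - (u - q)\<^sup>2 / 2" for u
      have uscG: "usc G" unfolding G_def
        by (rule usc_minus_cont[OF usc]) (intro continuous_intros; simp)
      have Gw: "G q \<le> G w" using neg by (simp add: G_def w_def)
      obtain z0 where z0: "z0 \<in> {q..w}" "\<And>u. u \<in> {q..w} \<Longrightarrow> G u \<le> G z0"
        using usc_max[OF uscG, of q w] x by (auto simp: w_def)
      define z where "z = (if z0 = q then w else z0)"
      have zmax: "G u \<le> G z" if "u \<in> {q..w}" for u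
        using z0(2)[OF that] z0(2)[of w] Gw x by (auto simp: z_def w_def)
      have qz: "q < z" "z \<le> w" using z0(1) x by (auto simp: z_def w_def)
      have Gqz: "G q \<le> G z" using zmax[of q] qz by simp
      have Lz: "Lp g z"
        unfolding Lp_def
      proof (intro allI impI)
        fix x' :: real assume x': "x' > 0"
        define u where "u = z - x'"
        show "g (z - x') - g z \<le> x'\<^sup>2 / 2"
        proof (cases "q \<le> u")
          case True
          have "G u \<le> G z" using zmax[of u] True qz x' by (simp add: u_def)
          then have "g u - g z \<le> ((u - q)\<^sup>2 - (z - q)\<^sup>2) / 2" unfolding G_def by (simp add: field_simps)
          also have "(u - q)\<^sup>2 - (z - q)\<^sup>2 = x'\<^sup>2 - 2 * x' * (z - q)"
            by (simp add: u_def power2_eq_square algebra_simps)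
          also have "\<dots> \<le> x'\<^sup>2" using x' qz by simp
          finally show ?thesis by (simp add: u_def)
        next
          case False
          have "g u - g q \<le> (q - u)\<^sup>2 / 2"
          proof -
            have "q - u > 0" using False by simp
            then have "g (q - (q - u)) - g q \<le> (q - u)\<^sup>2 / 2" using Lq unfolding Lp_def by blast
            then show ?thesis by simp
          qed
          moreover have "g q \<le> g z - (z - q)\<^sup>2 / 2" using Gqz by (simp add: G_def)
          moreover have "(q - u)\<^sup>2 \<le> x'\<^sup>2"
            using False qz x' unfolding u_def by (intro power_mono) linarith+
          moreover have "0 \<le> (z - q)\<^sup>2" by simp
          ultimately have "g u - g z \<le> x'\<^sup>2 / 2" by linarith
          then show ?thesis by (simp add: u_def)
        qed
      qed
      show False
      proof (cases "z \<le> y")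
        case True
        then have "z \<in> S" using pq qz Lz by (simp add: S_def)
        then show False using upper[of z] qz by linarith
      next
        case False
        have "G y \<le> G z" using zmax[of y] qy False qz by simp
        then have a: "(z - q)\<^sup>2 - (y - q)\<^sup>2 \<le> 2 * (g z - g y)" unfolding G_def by (simp add: field_simps)
        have "g (y + (z - y)) - g y < (z - y)\<^sup>2 / 2" using Ry False unfolding Rp_def by (meson diff_gt_0_iff_gt not_le)
        then have b: "2 * (g z - g y) < (z - y)\<^sup>2" by simp
        have c: "(z - q)\<^sup>2 - (y - q)\<^sup>2 = (z - y)\<^sup>2 + 2 * ((z - y) * (y - q))"
          by (simp add: power2_eq_square algebra_simps)
        have "0 \<le> (z - y) * (y - q)" using False qy by simp
        then show False using a b c by simp
      qed
    qed
  qed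
  show ?thesis using pq qy Lq Rq by blast
qed

theorem lemma5p2:
  fixes psi0 :: "real \<Rightarrow> real"
  assumes "cadlag psi0"
    and "((\<lambda>x. psi0 x / x\<^sup>2) \<longlongrightarrow> 0) at_infinity"
  shows "s_pt psi0 = t_pt psi0"
proof -
  define g where "g = psibar psi0"
  have usc: "usc g" unfolding g_def by (rule usc_psibar[OF assms(1)])
  define AL where "AL = {y. 0 \<le> y \<and> Lp g y}"
  define AT where "AT = {y. 0 \<le> y \<and> Lp g y \<and> Rp g y}"
  define r where "r = Inf (ereal ` AL)"
  define AS where "AS = {y. r \<le> ereal y \<and> Rp g y}"
  have r_eq: "r_pt psi0 = r" unfolding r_pt_def r_def AL_def Lp_def g_def by simp
  have t_eq: "t_pt psi0 = Inf (ereal ` AT)"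
    unfolding t_pt_def AT_def Lp_def Rp_def g_def by (rule arg_cong[where f=Inf]) auto
  have s_eq: "s_pt psi0 = Inf (ereal ` AS)"
    unfolding s_pt_def AS_def Rp_def r_eq[symmetric] g_def by simp
  have le1: "Inf (ereal ` AS) \<le> Inf (ereal ` AT)"
  proof (rule Inf_superset_mono, rule image_mono, rule subsetI)
    fix y assume "y \<in> AT"
    then have "y \<in> AL" "Rp g y" by (auto simp: AT_def AL_def)
    then show "y \<in> AS" unfolding AS_def r_def by (auto intro: Inf_lower)
  qed
  have le2: "Inf (ereal ` AT) \<le> Inf (ereal ` AS)"
  proof (rule Inf_greatest, elim imageE)
    fix e y assume e: "e = ereal y" and yAS: "y \<in> AS"
    have ry: "r \<le> ereal y" and Ry: "Rp g y" using yAS by (auto simp: AS_def)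
    have r0: "0 \<le> r" unfolding r_def by (rule Inf_greatest) (auto simp: AL_def)
    obtain p where p: "p \<in> AL" "p \<le> y"
    proof (cases "r < ereal y")
      case True
      then obtain p where "p \<in> AL" "ereal p < ereal y" unfolding r_def Inf_less_iff by blast
      then show ?thesis using that by auto
    next
      case False
      then have req: "r = ereal y" using ry by simp
      have "Lp g y"
      proof (rule L_closed[OF usc])
        fix eta :: real assume eta: "eta > 0"
        have "r < ereal (y + eta)" using req eta by simp
        then obtain p where p: "p \<in> AL" "ereal p < ereal (y + eta)" unfolding r_def Inf_less_iff by blast
        have "r \<le> ereal p" unfolding r_def using p(1) by (auto intro: Inf_lower)
        then have "y \<le> p" using req by simp
        then show "\<exists>y'. \<bar>y' - y\<bar> < eta \<and> Lp g y'" using p by (intro exI[of _ p]) (auto simp: AL_def)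
      qed
      moreover have "0 \<le> y" using r0 req by simp
      ultimately show ?thesis using that[of y] by (simp add: AL_def)
    qed
    obtain q where q: "p \<le> q" "q \<le> y" "Lp g q" "Rp g q"
      using key[OF usc p(2) _ Ry] p(1) by (auto simp: AL_def)
    have "q \<in> AT" using q p(1) by (auto simp: AT_def AL_def)
    then have "Inf (ereal ` AT) \<le> ereal q" by (auto intro: Inf_lower)
    also have "\<dots> \<le> ereal y" using q by simp
    finally show "Inf (ereal ` AT) \<le> e" using e by simp
  qed
  show ?thesis using le1 le2 s_eq t_eq by simp
qed

end
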